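(* Let $v=v(z)=zM(z)$, where $M(z)=\frac{1-z-\sqrt{1-2z-3z^2}}{2z^2}$ is the Motzkin generating function (so $z=\frac{v}{1+v+v^2}$). For every integer $h\ge0$, the generating function, by number of nodes, of Retakh plane trees of height at most $2h$ (for $h=0$: of height at most $1$) is $$\frac{z}{1-z}\cdot\frac{1}{1-\dfrac{F_h}{1-z}}=v\,\frac{1-v^{2h+2}}{1-v^{2h+4}}$$ for $h\ge1$, where $F_h=\frac{v^2}{1+v+v^2}\frac{1-v^{2h}}{1-v^{2h+2}}$, and equals $\frac{z}{1-z}=\frac{v}{1+v^2}$ for $h=0$.
   Context: A Retakh plane tree is a plane (ordered rooted) tree in which every non-root leaf has depth $1$ or even depth (root depth $0$); the one-node tree is included. These correspond bijectively (a tree with $n+1$ nodes to a path of semilength $n$) to Dyck paths all of whose peaks are at level $1$ or at an even level. The height of a tree is the maximal depth of a node, i.e. the number of edges of a longest root-to-node path; it equals the maximal height of the corresponding Dyck path. *)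

theory Defs
  imports Complex_Main
begin

datatype ptree = Node "ptree list"

fun nodes :: "ptree \<Rightarrow> nat" where
  "nodes (Node ts) = Suc (sum_list (map nodes ts))"

fun height :: "ptree \<Rightarrow> nat" where
  "height (Node ts) = (if ts = [] then 0 else Suc (Max (set (map height ts))))"

fun leaf_depths :: "nat \<Rightarrow> ptree \<Rightarrow> nat set" where
  "leaf_depths d (Node ts) =
     (if ts = [] then {d} else \<Union> (set (map (leaf_depths (Suc d)) ts)))"

text \<open>Retakh plane tree: every non-root leaf has depth 1 or even depth (root at depth 0).
  The one-node tree is included (it has no non-root leaf).\<close>
definition retakh :: "ptree \<Rightarrow> bool" where
  "retakh t = (case t of Node ts \<Rightarrow>
      (\<forall>s\<in>set ts. \<forall>d\<in>leaf_depths 1 s. d = 1 \<or> even d))"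

definition retakh_count :: "nat \<Rightarrow> nat \<Rightarrow> nat" where
  "retakh_count H n = card {t. retakh t \<and> nodes t = n \<and> height t \<le> H}"

definition motzkinM :: "real \<Rightarrow> real" where
  "motzkinM z = (1 - z - sqrt (1 - 2*z - 3*z^2)) / (2 * z^2)"

definition vfun :: "real \<Rightarrow> real" where
  "vfun z = z * motzkinM z"

definition Ffun :: "nat \<Rightarrow> real \<Rightarrow> real" where
  "Ffun h v = v^2 / (1 + v + v^2) * ((1 - v^(2*h)) / (1 - v^(2*h+2)))"

end

theory Submission imports Defs "HOL-Analysis.FPS_Convergence"
begin


abbreviation sn :: "ptree list \<Rightarrow> nat" where "sn ts \<equiv> sum_list (map nodes ts)"

lemma nodes_pos: "nodes t \<ge> 1"
  by (cases t) auto

lemma nodes_ne0[simp]: "nodes t \<noteq> 0"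
  by (cases t) auto

lemma length_le_sn: "length ts \<le> sn ts"
  by (induction ts) (auto simp: nodes_pos Suc_leI add_mono_thms_linordered_semiring(1) nodes_pos intro: order.trans[OF _ add_mono[OF nodes_pos order.refl]])

lemma mem_le_sn: "t \<in> set ts \<Longrightarrow> nodes t \<le> sn ts"
  using member_le_sum_list[of "nodes t" "map nodes ts"] by auto

lemma fin_lists_aux:
  assumes "\<forall>m\<le>n. finite {t. nodes t = m}"
  shows "finite {ts. sn ts = n}"
proof -
  have A: "finite {t. nodes t \<le> n}"
  proof -
    have "{t. nodes t \<le> n} = (\<Union>m\<in>{..n}. {t. nodes t = m})" by auto
    thus ?thesis using assms by auto
  qed
  have "{ts. sn ts = n} \<subseteq> {xs. set xs \<subseteq> {t. nodes t \<le> n} \<and> length xs \<le> n}"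
    using length_le_sn mem_le_sn by fastforce
  thus ?thesis using finite_lists_length_le[OF A] finite_subset by blast
qed

lemma nodes_Suc_eq: "{t. nodes t = Suc n} = Node ` {ts. sn ts = n}"
proof
  show "{t. nodes t = Suc n} \<subseteq> Node ` {ts. sn ts = n}"
  proof
    fix t assume "t \<in> {t. nodes t = Suc n}"
    then show "t \<in> Node ` {ts. sn ts = n}" by (cases t) auto
  qed
qed auto

lemma fin_trees: "finite {t. nodes t = n}"
proof (induction n rule: less_induct)
  case (less n)
  show ?case
  proof (cases n)
    case 0
    have "{t. nodes t = 0} = {}" using nodes_ne0 by auto
    then show ?thesis using 0 by simp
  next
    case (Suc m)
    have "finite {ts. sn ts = m}" using less Suc by (intro fin_lists_aux) auto
    then show ?thesis using Suc nodes_Suc_eq by simp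
  qed
qed

lemma fin_lists: "finite {ts. sn ts = n}"
  using fin_lists_aux fin_trees by blast

definition cnt :: "(ptree \<Rightarrow> bool) \<Rightarrow> nat \<Rightarrow> nat" where
  "cnt P n = card {t. P t \<and> nodes t = n}"

definition Lset :: "(ptree \<Rightarrow> bool) \<Rightarrow> nat \<Rightarrow> ptree list set" where
  "Lset P n = {ts. (\<forall>s\<in>set ts. P s) \<and> sn ts = n}"

lemma fin_Lset: "finite (Lset P n)"
  unfolding Lset_def by (rule finite_subset[OF _ fin_lists[of n]]) auto

lemma fin_cls: "finite {t. P t \<and> nodes t = n}"
  by (rule finite_subset[OF _ fin_trees[of n]]) auto

lemma Lset_0: "Lset P 0 = {[]}"
proof -
  have "sn ts = 0 \<Longrightarrow> ts = []" for ts by (cases ts) auto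
  thus ?thesis unfolding Lset_def by auto
qed

lemma Lset_Suc: "Lset P (Suc n) =
  (\<Union>m\<in>{..n}. (\<lambda>(t,ts). t#ts) ` ({t. P t \<and> nodes t = Suc m} \<times> Lset P (n - m)))"
proof (intro equalityI subsetI)
  fix xs assume xs: "xs \<in> Lset P (Suc n)"
  then obtain t ts where e: "xs = t # ts" unfolding Lset_def by (cases xs) auto
  obtain m where m: "nodes t = Suc m" using nodes_ne0 not0_implies_Suc by blast
  have "m \<le> n" "sn ts = n - m" using xs e m unfolding Lset_def by auto
  then show "xs \<in> (\<Union>m\<in>{..n}. (\<lambda>(t,ts). t#ts) ` ({t. P t \<and> nodes t = Suc m} \<times> Lset P (n - m)))"
    using xs e m unfolding Lset_def by (auto intro!: bexI[of _ m] image_eqI[of _ _ "(t,ts)"])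
next
  fix xs assume "xs \<in> (\<Union>m\<in>{..n}. (\<lambda>(t,ts). t#ts) ` ({t. P t \<and> nodes t = Suc m} \<times> Lset P (n - m)))"
  then show "xs \<in> Lset P (Suc n)" unfolding Lset_def by auto
qed

lemma card_Lset_Suc: "card (Lset P (Suc n)) = (\<Sum>m\<le>n. cnt P (Suc m) * card (Lset P (n - m)))"
proof -
  have "card (Lset P (Suc n)) = (\<Sum>m\<le>n. card ((\<lambda>(t,ts). t#ts) ` ({t. P t \<and> nodes t = Suc m} \<times> Lset P (n - m))))"
    unfolding Lset_Suc
    by (rule card_UN_disjoint) (auto simp: fin_Lset fin_cls)
  also have "\<dots> = (\<Sum>m\<le>n. cnt P (Suc m) * card (Lset P (n - m)))"
  proof (rule sum.cong[OF refl])
    fix m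
    have "inj_on (\<lambda>(t,ts). t#ts) ({t. P t \<and> nodes t = Suc m} \<times> Lset P (n - m))"
      by (auto simp: inj_on_def)
    thus "card ((\<lambda>(t,ts). t#ts) ` ({t. P t \<and> nodes t = Suc m} \<times> Lset P (n - m))) = cnt P (Suc m) * card (Lset P (n - m))"
      by (simp add: card_image card_cartesian_product cnt_def)
  qed
  finally show ?thesis .
qed

lemma cnt_0: "cnt P 0 = 0"
  unfolding cnt_def by simp

definition GF :: "(ptree \<Rightarrow> bool) \<Rightarrow> real fps" where
  "GF P = Abs_fps (\<lambda>n. real (cnt P n))"

definition LGF :: "(ptree \<Rightarrow> bool) \<Rightarrow> real fps" where
  "LGF P = Abs_fps (\<lambda>n. real (card (Lset P n)))"

lemma LGF_eq: "LGF P = inverse (1 - GF P)"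
proof -
  have "(1 - GF P) * LGF P = 1"
  proof (rule fps_ext)
    fix n
    show "fps_nth ((1 - GF P) * LGF P) n = fps_nth 1 n"
    proof (cases n)
      case 0
      then show ?thesis by (simp add: LGF_def GF_def cnt_0 Lset_0)
    next
      case (Suc k)
      have "fps_nth ((1 - GF P) * LGF P) n = fps_nth (LGF P) n - fps_nth (GF P * LGF P) n"
        by (simp add: algebra_simps)
      also have "fps_nth (GF P * LGF P) n = (\<Sum>i=0..Suc k. real (cnt P i) * real (card (Lset P (Suc k - i))))"
        using Suc by (simp add: fps_mult_nth GF_def LGF_def)
      also have "\<dots> = (\<Sum>i\<le>Suc k. real (cnt P i) * real (card (Lset P (Suc k - i))))"
        by (simp add: atLeast0AtMost)
      also have "\<dots> = (\<Sum>m\<le>k. real (cnt P (Suc m)) * real (card (Lset P (k - m))))"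
        by (subst sum.atMost_Suc_shift) (simp add: cnt_0)
      also have "\<dots> = real (card (Lset P (Suc k)))"
        by (simp add: card_Lset_Suc)
      finally show ?thesis using Suc by (simp add: LGF_def)
    qed
  qed
  from fps_inverse_unique[OF this] show ?thesis by simp
qed

lemma GF_Node: "GF R = fps_X * Abs_fps (\<lambda>n. real (card {ts. R (Node ts) \<and> sn ts = n}))"
proof (rule fps_ext)
  fix n
  show "fps_nth (GF R) n = fps_nth (fps_X * Abs_fps (\<lambda>n. real (card {ts. R (Node ts) \<and> sn ts = n}))) n"
  proof (cases n)
    case 0 then show ?thesis by (simp add: GF_def cnt_0)
  next
    case (Suc k)
    have "{t. R t \<and> nodes t = Suc k} = Node ` {ts. R (Node ts) \<and> sn ts = k}"
    proof (intro equalityI subsetI)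
      fix t assume "t \<in> {t. R t \<and> nodes t = Suc k}" then show "t \<in> Node ` {ts. R (Node ts) \<and> sn ts = k}"
        by (cases t) auto
    qed auto
    moreover have "inj Node" by (auto simp: inj_def)
    ultimately show ?thesis using Suc by (simp add: GF_def cnt_def card_image inj_on_subset[of Node UNIV])
  qed
qed



definition Ev_of :: "nat \<Rightarrow> ptree \<Rightarrow> bool" where
  "Ev_of d t = (\<forall>x\<in>leaf_depths d t. even x)"

lemma Ev_of_Node: "Ev_of d (Node ts) = (if ts = [] then even d else (\<forall>s\<in>set ts. Ev_of (Suc d) s))"
  unfolding Ev_of_def by auto

lemma Ev_of_SS: "Ev_of (Suc (Suc d)) t = Ev_of d t"
proof (induction t arbitrary: d)
  case (Node ts)
  then show ?case by (simp add: Ev_of_Node)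
qed

lemma leaf_depths_ge: "x \<in> leaf_depths d t \<Longrightarrow> d \<le> x"
proof (induction t arbitrary: d x)
  case (Node ts)
  then show ?case by (fastforce split: if_splits)
qed

lemma height_Node_less: "height (Node ts) < Suc j \<longleftrightarrow> (\<forall>s\<in>set ts. height s < j)"
  by (auto simp: Max_less_iff)

definition Od' :: "nat \<Rightarrow> ptree \<Rightarrow> bool" where
  "Od' j t = (Ev_of 1 t \<and> height t < j)"
definition Ev' :: "nat \<Rightarrow> ptree \<Rightarrow> bool" where
  "Ev' j t = (Ev_of 0 t \<and> height t < j)"

fun AA :: "nat \<Rightarrow> real fps" and BB :: "nat \<Rightarrow> real fps" where
  "AA 0 = 0"
| "AA (Suc k) = fps_X * (inverse (1 - BB k) - 1)"
| "BB 0 = 0"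
| "BB (Suc k) = fps_X * inverse (1 - AA k)"

lemma Od'_Node: "Od' (Suc k) (Node ts) = (ts \<noteq> [] \<and> (\<forall>s\<in>set ts. Ev' k s))"
  unfolding Od'_def Ev'_def height_Node_less
  by (auto simp: Ev_of_Node Ev_of_SS[of 0, simplified] numeral_2_eq_2)

lemma Ev'_Node: "Ev' (Suc k) (Node ts) = (\<forall>s\<in>set ts. Od' k s)"
  unfolding Od'_def Ev'_def height_Node_less
  by (auto simp: Ev_of_Node)

lemma GF_AB: "GF (Od' j) = AA j \<and> GF (Ev' j) = BB j"
proof (induction j)
  case 0
  have "\<And>n. cnt (Od' 0) n = 0" "\<And>n. cnt (Ev' 0) n = 0"
    by (auto simp: cnt_def Od'_def Ev'_def)
  then show ?case by (simp add: GF_def fps_zero_def)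
next
  case (Suc k)
  have 1: "GF (Od' (Suc k)) = AA (Suc k)"
  proof -
    have "card {ts. Od' (Suc k) (Node ts) \<and> sn ts = n} = card (Lset (Ev' k) n) - (if n = 0 then 1 else 0)" for n
    proof -
      have "{ts. Od' (Suc k) (Node ts) \<and> sn ts = n} = Lset (Ev' k) n - {[]}"
        by (auto simp: Od'_Node Lset_def)
      moreover have "([] \<in> Lset (Ev' k) n) = (n = 0)" by (auto simp: Lset_def)
      ultimately show ?thesis by (simp add: card_Diff_singleton_if fin_Lset)
    qed
    moreover have "n = 0 \<Longrightarrow> card (Lset (Ev' k) n) = 1" for n by (simp add: Lset_0)
    ultimately have "Abs_fps (\<lambda>n. real (card {ts. Od' (Suc k) (Node ts) \<and> sn ts = n})) = LGF (Ev' k) - 1"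
      by (intro fps_ext) (auto simp: LGF_def)
    then show ?thesis using Suc by (simp add: GF_Node[of "Od' (Suc k)"] LGF_eq)
  qed
  have 2: "GF (Ev' (Suc k)) = BB (Suc k)"
  proof -
    have "{ts. Ev' (Suc k) (Node ts) \<and> sn ts = n} = Lset (Od' k) n" for n
      by (auto simp: Ev'_Node Lset_def)
    then have "Abs_fps (\<lambda>n. real (card {ts. Ev' (Suc k) (Node ts) \<and> sn ts = n})) = LGF (Od' k)"
      by (simp add: LGF_def)
    then show ?thesis using Suc by (simp add: GF_Node[of "Ev' (Suc k)"] LGF_eq)
  qed
  from 1 2 show ?case by simp
qed

definition TT :: "nat \<Rightarrow> real fps" where
  "TT H = fps_X * inverse (1 - (fps_X + AA H))"

lemma retakh_Node_sub:
  "(\<forall>d\<in>leaf_depths 1 s. d = 1 \<or> even d) = (s = Node [] \<or> Ev_of 1 s)"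
proof (cases s)
  case (Node us)
  show ?thesis
  proof (cases us)
    case Nil then show ?thesis using Node by (simp add: Ev_of_def)
  next
    case (Cons u us')
    have "x \<in> leaf_depths 1 s \<Longrightarrow> 2 \<le> x" for x
      using Node Cons leaf_depths_ge[of x "Suc (Suc 0)"] by (auto simp: numeral_2_eq_2)
    then show ?thesis using Node Cons unfolding Ev_of_def by fastforce
  qed
qed

lemma retakh_count_TT:
  assumes "H \<ge> 1"
  shows "real (retakh_count H n) = fps_nth (TT H) n"
proof -
  let ?Q = "\<lambda>s. (s = Node [] \<or> Ev_of 1 s) \<and> height s < H"
  let ?R = "\<lambda>t. retakh t \<and> height t < Suc H"
  have R: "?R (Node ts) = (\<forall>s\<in>set ts. ?Q s)" for ts
    unfolding retakh_def height_Node_less using retakh_Node_sub by auto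
  have cQ: "cnt ?Q m = cnt (Od' H) m + (if m = 1 then 1 else 0)" for m
  proof -
    have "{t. ?Q t \<and> nodes t = m} = {t. Od' H t \<and> nodes t = m} \<union> (if m = 1 then {Node []} else {})"
      using assms by (auto simp: Od'_def Ev_of_def)
    moreover have "\<not> Od' H (Node [])" by (auto simp: Od'_def Ev_of_def)
    ultimately show ?thesis unfolding cnt_def by (simp add: card_insert_if fin_cls)
  qed
  have GQ: "GF ?Q = fps_X + AA H"
  proof (rule fps_ext)
    fix n
    have AAn: "fps_nth (AA H) n = real (cnt (Od' H) n)"
      using GF_AB[of H] unfolding GF_def by (metis fps_nth_Abs_fps)
    show "fps_nth (GF ?Q) n = fps_nth (fps_X + AA H) n"
      unfolding GF_def fps_nth_Abs_fps fps_add_nth AAn cQ by (simp add: fps_X_nth)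
  qed
  have "{ts. ?R (Node ts) \<and> sn ts = n} = Lset ?Q n" for n
    using R by (auto simp: Lset_def)
  then have "GF ?R = fps_X * LGF ?Q" by (simp add: GF_Node[of ?R] LGF_def)
  also have "\<dots> = TT H" unfolding LGF_eq GQ TT_def by (rule refl)
  finally have "fps_nth (GF ?R) n = fps_nth (TT H) n" by simp
  moreover have "{t. retakh t \<and> nodes t = n \<and> height t \<le> H} = {t. ?R t \<and> nodes t = n}" by auto
  ultimately show ?thesis by (simp add: GF_def cnt_def retakh_count_def)
qed



fun Af :: "nat \<Rightarrow> real \<Rightarrow> real" and Bf :: "nat \<Rightarrow> real \<Rightarrow> real" where
  "Af 0 = (\<lambda>_. 0)"
| "Af (Suc k) = (\<lambda>z. z * (inverse (1 - Bf k z) - 1))"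
| "Bf 0 = (\<lambda>_. 0)"
| "Bf (Suc k) = (\<lambda>z. z * inverse (1 - Af k z))"

lemma AB_nth0: "fps_nth (AA k) 0 = 0 \<and> fps_nth (BB k) 0 = 0"
  by (cases k) auto

lemma AB_exp: "Af k has_fps_expansion AA k \<and> Bf k has_fps_expansion BB k"
proof (induction k)
  case 0 then show ?case by simp
next
  case (Suc k)
  have n1: "fps_nth (1 - BB k) 0 \<noteq> 0" "fps_nth (1 - AA k) 0 \<noteq> 0" using AB_nth0[of k] by auto
  have "(\<lambda>z. z * (inverse (1 - Bf k z) - 1)) has_fps_expansion fps_X * (inverse (1 - BB k) - 1)"
    using Suc n1 by (intro fps_expansion_intros) auto
  moreover have "(\<lambda>z. z * inverse (1 - Af k z)) has_fps_expansion fps_X * inverse (1 - AA k)"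
    using Suc n1 by (intro fps_expansion_intros) auto
  ultimately show ?case by simp
qed

lemma TT_exp: "(\<lambda>z. z * inverse (1 - (z + Af H z))) has_fps_expansion TT H"
proof -
  have n1: "fps_nth (1 - (fps_X + AA H)) 0 \<noteq> 0" using AB_nth0[of H] by auto
  show ?thesis unfolding TT_def using AB_exp[of H] n1 by (intro fps_expansion_intros) auto
qed

lemma v_props:
  fixes z :: real
  assumes "z \<noteq> 0" "\<bar>z\<bar> < 1/8"
  shows "z * (1 + vfun z + (vfun z)^2) = vfun z" "\<bar>vfun z\<bar> < 1/2"
proof -
  define s where "s = sqrt (1 - 2*z - 3*z^2)"
  have "\<bar>z\<bar>^2 < (1/8)^2" using assms by (intro power_strict_mono) auto
  hence "z^2 < 1/64" by (simp add: power2_eq_square)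
  hence pos: "1 - 2*z - 3*z^2 \<ge> 0" using assms by (auto simp: abs_less_iff)
  have s2: "s^2 = 1 - 2*z - 3*z^2" "s \<ge> 0" using pos by (auto simp: s_def)
  have v: "vfun z = (1 - z - s) / (2*z)"
    using assms(1) by (simp add: vfun_def motzkinM_def s_def power2_eq_square field_simps)
  show "z * (1 + vfun z + (vfun z)^2) = vfun z"
    unfolding v using assms(1) s2 by (simp add: field_simps power2_eq_square) algebra
  have e: "vfun z * (1 - z + s) = 2*z"
    unfolding v using assms(1) s2 by (simp add: field_simps power2_eq_square)
  have p: "1 - z + s \<ge> 7/8" using s2 assms by auto
  have "\<bar>vfun z * (1 - z + s)\<bar> = 2*\<bar>z\<bar>" using e by simp
  hence e2: "\<bar>vfun z\<bar> * (1 - z + s) = 2*\<bar>z\<bar>" using p by (simp add: abs_mult)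
  have "\<bar>vfun z\<bar> * (7/8) \<le> \<bar>vfun z\<bar> * (1 - z + s)" using p by (intro mult_left_mono) auto
  then show "\<bar>vfun z\<bar> < 1/2" using e2 assms(2) by linarith
qed



context
  fixes v w z :: real
  assumes D: "1 + v + v^2 > 0" and V: "1 + v > 0"
    and n2: "1 - w* v^2 \<noteq> 0" and n3: "1 - w* v^3 \<noteq> 0" and n4: "1 - w* v^4 \<noteq> 0"
    and zv: "z = v / (1 + v + v^2)"
begin

lemma D': "1 + v + v^2 \<noteq> 0" using D by simp
lemma V': "1 + v \<noteq> 0" using V by simp
lemma nn: "w * v^2 \<noteq> 1" "w * v^3 \<noteq> 1" "w * v^4 \<noteq> 1" using n2 n3 n4 by auto

lemma alg1: "z * inverse (1 - v^2/(1+v+v^2) * ((1-w)/(1-w* v^2))) = v *(1-w* v^2)/((1+v)*(1-w* v^3))"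
proof -
  have "1 - v^2/(1+v+v^2) * ((1-w)/(1-w* v^2)) = ((1+v)*(1-w* v^3))/((1+v+v^2)*(1-w* v^2))"
    using D n2 by (simp add: divide_simps D' n2 n3) algebra
  note e = this
  show ?thesis unfolding e unfolding zv by (simp add: divide_simps D' V' n2 n3 n4 nn)
qed

lemma alg2: "z * (inverse (1 - v *(1-w* v^2)/((1+v)*(1-w* v^3))) - 1) = v^2/(1+v+v^2) * ((1-w* v^2)/(1-w* v^4))"
proof -
  have "1 - v *(1-w* v^2)/((1+v)*(1-w* v^3)) = (1-w* v^4)/((1+v)*(1-w* v^3))"
    using V n3 by (simp add: divide_simps D' V' n2 n3 n4) algebra
  note e = this
  show ?thesis unfolding e unfolding zv by (simp add: divide_simps D' V' n2 n3 n4 nn) algebra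
qed

lemma alg3: "z * inverse (1 - (z + v^2/(1+v+v^2) * ((1-w)/(1-w* v^2)))) = v *(1-w* v^2)/(1-w* v^4)"
proof -
  have "1 - (z + v^2/(1+v+v^2) * ((1-w)/(1-w* v^2))) = (1-w* v^4)/((1+v+v^2)*(1-w* v^2))"
    using D n2 zv by (simp add: divide_simps D' V' n2 n3 n4) algebra
  note e = this
  show ?thesis unfolding e unfolding zv by (simp add: divide_simps D' V' n2 n3 n4 nn)
qed

end



lemma pow_ne1: assumes "\<bar>v::real\<bar> < 1/2" "n \<ge> 1" shows "1 - v^n \<noteq> 0"
proof
  assume "1 - v^n = 0"
  hence "\<bar>v\<bar>^n = 1" by (metis abs_one eq_iff_diff_eq_0 power_abs)
  moreover have "\<bar>v\<bar>^n < 1" using assms by (subst power_less_one_iff) auto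
  ultimately show False by simp
qed

lemma closed_form:
  fixes z v :: real
  assumes zr: "z * (1 + v + v^2) = v" and vb: "\<bar>v\<bar> < 1/2"
  shows "Af (2*h) z = Ffun h v"
proof (induction h)
  case 0 then show ?case by (simp add: Ffun_def)
next
  case (Suc h)
  have "(v+1/2)^2 = v^2 + v + 1/4" by (simp add: power2_eq_square algebra_simps)
  moreover have "(v+1/2)^2 \<ge> 0" by simp
  ultimately have D: "1 + v + v^2 > 0" by linarith
  have V: "1 + v > 0" using vb by auto
  have zv: "z = v / (1 + v + v^2)" using zr D by (simp add: field_simps)
  define w where "w = v^(2*h)"
  have p2: "v^(2*h+2) = w * v^2" "v^(2*h+3) = w * v^3" "v^(2*h+4) = w * v^4"
    unfolding w_def power_add by (rule refl)+
  have n2: "1 - w * v^2 \<noteq> 0" using pow_ne1[OF vb, of "2*h+2"] p2 by simp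
  have n3: "1 - w * v^3 \<noteq> 0" using pow_ne1[OF vb, of "2*h+3"] p2 by simp
  have n4: "1 - w * v^4 \<noteq> 0" using pow_ne1[OF vb, of "2*h+4"] p2 by simp
  have F: "Ffun h v = v^2/(1+v+v^2) * ((1-w)/(1-w * v^2))"
    unfolding Ffun_def p2(1) by (simp only: w_def)
  have B: "Bf (Suc (2*h)) z = v * (1 - w * v^2)/((1+v)*(1 - w * v^3))"
    using Suc alg1[OF D V n2 n3 n4 zv] F by simp
  have "Af (2 * Suc h) z = Af (Suc (Suc (2*h))) z" by simp
  also have "\<dots> = v^2/(1+v+v^2) * ((1 - w * v^2)/(1 - w * v^4))"
    using B alg2[OF D V n2 n3 n4 zv] by simp
  also have "\<dots> = Ffun (Suc h) v"
  proof -
    have e: "2 * Suc h + 2 = 2*h+4" "2 * Suc h = 2*h+2" by simp_all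
    show ?thesis unfolding Ffun_def unfolding e(1) unfolding e(2) p2(1) p2(3) by (rule refl)
  qed
  finally show ?case .
qed

lemma series_part:
  assumes "H \<ge> 1"
  shows "\<exists>r>0. \<forall>z::real. \<bar>z\<bar> < r \<longrightarrow>
    (\<lambda>n. real (retakh_count H n) * z ^ n) sums (z * inverse (1 - (z + Af H z)))"
proof -
  from TT_exp[of H] have R: "fps_conv_radius (TT H) > 0"
    and ev: "eventually (\<lambda>z. eval_fps (TT H) z = z * inverse (1 - (z + Af H z))) (nhds 0)"
    unfolding has_fps_expansion_def by auto
  from ev obtain d where d: "d > 0" "\<And>z. dist z 0 < d \<Longrightarrow> eval_fps (TT H) z = z * inverse (1 - (z + Af H z))"
    unfolding eventually_nhds_metric by blast
  from ereal_dense2[OF R] obtain r0 where r0: "0 < ereal r0" "ereal r0 < fps_conv_radius (TT H)" by blast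
  show ?thesis
  proof (intro exI[of _ "min d r0"] conjI allI impI)
    show "0 < min d r0" using d r0 by auto
    fix z :: real assume z: "\<bar>z\<bar> < min d r0"
    have "ereal (norm z) < fps_conv_radius (TT H)" using z r0
    proof -
      have "ereal \<bar>z\<bar> < ereal r0" using z by simp
      thus ?thesis using r0(2) by (simp only: real_norm_def)
    qed
    from sums_eval_fps[OF this] have "(\<lambda>n. fps_nth (TT H) n * z ^ n) sums eval_fps (TT H) z" .
    moreover have "eval_fps (TT H) z = z * inverse (1 - (z + Af H z))" using d z by auto
    ultimately show "(\<lambda>n. real (retakh_count H n) * z ^ n) sums (z * inverse (1 - (z + Af H z)))"
      using retakh_count_TT[OF assms] by simp
  qed
qed

lemma final_alg:
  fixes z v :: real
  assumes zr: "z * (1 + v + v^2) = v" and vb: "\<bar>v\<bar> < 1/2"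
  shows "z * inverse (1 - (z + Ffun h v)) = v * (1 - v^(2*h+2)) / (1 - v^(2*h+4))"
proof -
  have "(v+1/2)^2 = v^2 + v + 1/4" by (simp add: power2_eq_square algebra_simps)
  moreover have "(v+1/2)^2 \<ge> 0" by simp
  ultimately have D: "1 + v + v^2 > 0" by linarith
  have V: "1 + v > 0" using vb by auto
  have zv: "z = v / (1 + v + v^2)" using zr D by (simp add: field_simps)
  define w where "w = v^(2*h)"
  have p2: "v^(2*h+2) = w * v^2" "v^(2*h+3) = w * v^3" "v^(2*h+4) = w * v^4"
    unfolding w_def power_add by (rule refl)+
  have n2: "1 - w * v^2 \<noteq> 0" using pow_ne1[OF vb, of "2*h+2"] p2 by simp
  have n3: "1 - w * v^3 \<noteq> 0" using pow_ne1[OF vb, of "2*h+3"] p2 by simp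
  have n4: "1 - w * v^4 \<noteq> 0" using pow_ne1[OF vb, of "2*h+4"] p2 by simp
  have F: "Ffun h v = v^2/(1+v+v^2) * ((1-w)/(1-w * v^2))"
    unfolding Ffun_def p2(1) by (simp only: w_def)
  show ?thesis unfolding F p2(1) p2(3) by (rule alg3[OF D V n2 n3 n4 zv])
qed

lemma rewrite_form:
  fixes z F :: real
  assumes "z \<noteq> 1"
  shows "z / (1 - z) * (1 / (1 - F / (1 - z))) = z * inverse (1 - (z + F))"
proof -
  have a: "1 - z \<noteq> 0" using assms by simp
  have "(1 - (z + F)) / (1 - z) = ((1 - z) - F) / (1 - z)" by (simp add: algebra_simps)
  also have "\<dots> = 1 - F / (1 - z)" using a by (simp add: diff_divide_distrib)
  finally have "1 - F / (1 - z) = (1 - (z + F)) / (1 - z)" by simp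
  hence "1 / (1 - F / (1 - z)) = (1 - z) / (1 - (z + F))" by simp
  hence "z / (1 - z) * (1 / (1 - F / (1 - z))) = z / (1 - z) * ((1 - z) / (1 - (z + F)))" by simp
  also have "\<dots> = z / (1 - (z + F))" using a by simp
  finally show ?thesis by (simp add: divide_inverse)
qed

theorem mainTheorem3:
  fixes h :: nat
  shows "\<exists>r>0. \<forall>z::real. z \<noteq> 0 \<and> \<bar>z\<bar> < r \<longrightarrow>
    (let v = vfun z in
      (h = 0 \<longrightarrow>
         (\<lambda>n. real (retakh_count 1 n) * z ^ n) sums (z / (1 - z)) \<and>
         z / (1 - z) = v / (1 + v^2)) \<and>
      (h \<ge> 1 \<longrightarrow>
         (\<lambda>n. real (retakh_count (2*h) n) * z ^ n) sums
            (z / (1 - z) * (1 / (1 - Ffun h v / (1 - z)))) \<and>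
         z / (1 - z) * (1 / (1 - Ffun h v / (1 - z))) =
            v * (1 - v^(2*h+2)) / (1 - v^(2*h+4))))"
proof (cases "h = 0")
  case True
  obtain r where r: "r > 0" "\<And>z::real. \<bar>z\<bar> < r \<Longrightarrow>
    (\<lambda>n. real (retakh_count 1 n) * z ^ n) sums (z * inverse (1 - (z + Af 1 z)))"
    using series_part[of 1] by auto
  show ?thesis
  proof (intro exI[of _ "min r (1/8)"] conjI allI impI)
    show "0 < min r (1/8)" using r by simp
    fix z :: real assume z: "z \<noteq> 0 \<and> \<bar>z\<bar> < min r (1/8)"
    define v where "v = vfun z"
    have z0: "z \<noteq> 0" and z8: "\<bar>z\<bar> < 1/8" using z by auto
    have zr: "z * (1 + v + v^2) = v" using v_props(1)[OF z0 z8] unfolding v_def .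
    have z1: "1 - z \<noteq> 0" using z by auto
    have s: "(\<lambda>n. real (retakh_count 1 n) * z ^ n) sums (z / (1 - z))"
    proof -
      have zr': "\<bar>z\<bar> < r" using z by simp
      have a0: "Af 1 z = 0" by (simp add: One_nat_def)
      from r(2)[OF zr'] show ?thesis by (simp only: a0 add_0_right divide_inverse)
    qed
    have "1 + v^2 > 0" by (simp add: add_pos_nonneg)
    hence "z / (1 - z) = v / (1 + v^2)"
    proof -
      assume p: "1 + v^2 > 0"
      have "z * (1 + v^2) = z * (1 + v + v^2) - v * z" by (simp add: algebra_simps)
      also have "\<dots> = v * (1 - z)" using zr by (simp add: algebra_simps)
      finally have "z * (1 + v^2) = v * (1 - z)" .
      thus ?thesis using p z1 by (simp add: frac_eq_eq)
    qed
    then show "let v = vfun z in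
      (h = 0 \<longrightarrow>
         (\<lambda>n. real (retakh_count 1 n) * z ^ n) sums (z / (1 - z)) \<and>
         z / (1 - z) = v / (1 + v^2)) \<and>
      (h \<ge> 1 \<longrightarrow>
         (\<lambda>n. real (retakh_count (2*h) n) * z ^ n) sums
            (z / (1 - z) * (1 / (1 - Ffun h v / (1 - z)))) \<and>
         z / (1 - z) * (1 / (1 - Ffun h v / (1 - z))) =
            v * (1 - v^(2*h+2)) / (1 - v^(2*h+4)))"
      unfolding Let_def v_def[symmetric] using True s by simp
  qed
next
  case False
  hence H: "2*h \<ge> 1" by simp
  obtain r where r: "r > 0" "\<And>z::real. \<bar>z\<bar> < r \<Longrightarrow>
    (\<lambda>n. real (retakh_count (2*h) n) * z ^ n) sums (z * inverse (1 - (z + Af (2*h) z)))"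
    using series_part[OF H] by auto
  show ?thesis
  proof (intro exI[of _ "min r (1/8)"] conjI allI impI)
    show "0 < min r (1/8)" using r by simp
    fix z :: real assume z: "z \<noteq> 0 \<and> \<bar>z\<bar> < min r (1/8)"
    define v where "v = vfun z"
    have z0: "z \<noteq> 0" and z8: "\<bar>z\<bar> < 1/8" using z by auto
    have zr: "z * (1 + v + v^2) = v" using v_props(1)[OF z0 z8] unfolding v_def .
    have vb: "\<bar>v\<bar> < 1/2" using v_props(2)[OF z0 z8] unfolding v_def .
    have z1: "z \<noteq> 1" using z by auto
    have A: "Af (2*h) z = Ffun h v" by (rule closed_form[OF zr vb])
    have e1: "z / (1 - z) * (1 / (1 - Ffun h v / (1 - z))) = z * inverse (1 - (z + Af (2*h) z))"
      unfolding A by (rule rewrite_form[OF z1])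
    have e2: "z * inverse (1 - (z + Af (2*h) z)) = v * (1 - v^(2*h+2)) / (1 - v^(2*h+4))"
      unfolding A by (rule final_alg[OF zr vb])
    have s: "(\<lambda>n. real (retakh_count (2*h) n) * z ^ n) sums (z / (1 - z) * (1 / (1 - Ffun h v / (1 - z))))"
    proof -
      have zr': "\<bar>z\<bar> < r" using z by simp
      from r(2)[OF zr'] show ?thesis unfolding e1 .
    qed
    show "let v = vfun z in
      (h = 0 \<longrightarrow>
         (\<lambda>n. real (retakh_count 1 n) * z ^ n) sums (z / (1 - z)) \<and>
         z / (1 - z) = v / (1 + v^2)) \<and>
      (h \<ge> 1 \<longrightarrow>
         (\<lambda>n. real (retakh_count (2*h) n) * z ^ n) sums
            (z / (1 - z) * (1 / (1 - Ffun h v / (1 - z)))) \<and>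
         z / (1 - z) * (1 / (1 - Ffun h v / (1 - z))) =
            v * (1 - v^(2*h+2)) / (1 - v^(2*h+4)))"
      unfolding Let_def v_def[symmetric] using False s e1 e2 by simp
  qed
qed


end
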